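(* Fix a slot $n$ and state $(\mathbf x(n),\mathbf g(n))$ of the model in the context. Let $\pi$ choose the feasible withdrawal vector $\mathbf y(n)$, let $\mathbf I(f,t)$ be a balancing interchange with respect to $\mathbf y(n)$, and let $\pi^*$ choose $\mathbf y^*(n)=\mathbf y(n)+\mathbf I(f,t)$ at slot $n$. Order the updated lengths $\hat x_0(n),\dots,\hat x_L(n)$ under $\pi$ in non-increasing order with queue $0$ placed last; let $l$ be the position of queue $f$ and $s$ the position of queue $t$ in this order, ties being resolved so that every entry after position $l$ is strictly smaller than the entry at position $l$ and every entry before position $s$ is strictly larger than the entry at position $s$ (so $s>l$). Then $$\kappa_n(\pi^* )=\kappa_n(\pi)-2(s-l)\cdot\mathbb 1_{\{\hat x_{[l]}(n)\ge\hat x_{[s]}(n)+2\}},$$ where $\hat x_{[l]}(n)=\hat x_f(n)$ and $\hat x_{[s]}(n)=\hat x_t(n)$.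
   Context: Model: slotted time; real queues $1,\dots,L$, dummy queue $0$, $K$ identical servers. State $(\mathbf x(n),\mathbf g(n))$: queue lengths $x_i(n)\in\mathbb Z_+$ ($x_0=0$) and connectivities $g_{i,j}(n)\in\{0,1\}$ ($g_{0,j}=1$). A scheduling control $\mathbf q\in\{0,\dots,L\}^K$ (server $j$ serves queue $q_j$, $0$ = idle) is feasible if $g_{q_j,j}=1$ for all $j$ and each real queue $i$ receives at most $x_i$ servers; its withdrawal vector is $y_i=\#\{j:q_j=i\}$. Feasible withdrawal vectors are those arising from feasible controls. Updated sizes $\hat x_i(n)=x_i(n)-y_i(n)$. Imbalance index of a policy choosing $\mathbf y(n)$: $\kappa_n=\sum_{i=1}^{L}\sum_{j=i+1}^{L+1}(\hat x_{[i]}(n)-\hat x_{[j]}(n))$ where $[1],\dots,[L]$ order the real queues by non-increasing $\hat x$ and $[L+1]=0$. Interchange: for $f,t\in\{0,\dots,L\}$, $f\ne t$, $\mathbf I(f,t)\in\mathbb Z^{L+1}$ has $+1$ in component $f$, $-1$ in component $t$, $0$ elsewhere. It is feasible (w.r.t. $\mathbf y(n)$) if $\mathbf y(n)+\mathbf I(f,t)$ is a feasible withdrawal vector, and balancing if it is feasible and $\hat x_f(n)\ge\hat x_t(n)+1$. *)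

theory Defs
  imports Main
begin

(* Real queues 1..L, dummy queue 0, servers 1..K.
   x i : queue lengths (x 0 = 0), g i j : connectivity of queue i to server j. *)

definition feasible_control ::
  "nat \<Rightarrow> nat \<Rightarrow> (nat \<Rightarrow> nat) \<Rightarrow> (nat \<Rightarrow> nat \<Rightarrow> bool) \<Rightarrow> (nat \<Rightarrow> nat) \<Rightarrow> bool" where
  "feasible_control L K x g q \<longleftrightarrow>
     (\<forall>j\<in>{1..K}. q j \<le> L \<and> g (q j) j) \<and>
     (\<forall>i\<in>{1..L}. card {j\<in>{1..K}. q j = i} \<le> x i)"

definition withdrawal :: "nat \<Rightarrow> (nat \<Rightarrow> nat) \<Rightarrow> nat \<Rightarrow> int" where
  "withdrawal K q i = int (card {j\<in>{1..K}. q j = i})"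

definition feasible_withdrawal ::
  "nat \<Rightarrow> nat \<Rightarrow> (nat \<Rightarrow> nat) \<Rightarrow> (nat \<Rightarrow> nat \<Rightarrow> bool) \<Rightarrow> (nat \<Rightarrow> int) \<Rightarrow> bool" where
  "feasible_withdrawal L K x g y \<longleftrightarrow>
     (\<exists>q. feasible_control L K x g q \<and> (\<forall>i\<le>L. y i = withdrawal K q i))"

definition xhat :: "(nat \<Rightarrow> nat) \<Rightarrow> (nat \<Rightarrow> int) \<Rightarrow> nat \<Rightarrow> int" where
  "xhat x y i = int (x i) - y i"

definition interchange :: "nat \<Rightarrow> nat \<Rightarrow> nat \<Rightarrow> int" where
  "interchange f t i = (if i = f then 1 else if i = t then -1 else 0)"

definition feasible_interchange ::
  "nat \<Rightarrow> nat \<Rightarrow> (nat \<Rightarrow> nat) \<Rightarrow> (nat \<Rightarrow> nat \<Rightarrow> bool) \<Rightarrow> (nat \<Rightarrow> int) \<Rightarrow> nat \<Rightarrow> nat \<Rightarrow> bool" where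
  "feasible_interchange L K x g y f t \<longleftrightarrow>
     f \<le> L \<and> t \<le> L \<and> f \<noteq> t \<and>
     feasible_withdrawal L K x g (\<lambda>i. y i + interchange f t i)"

definition balancing_interchange ::
  "nat \<Rightarrow> nat \<Rightarrow> (nat \<Rightarrow> nat) \<Rightarrow> (nat \<Rightarrow> nat \<Rightarrow> bool) \<Rightarrow> (nat \<Rightarrow> int) \<Rightarrow> nat \<Rightarrow> nat \<Rightarrow> bool" where
  "balancing_interchange L K x g y f t \<longleftrightarrow>
     feasible_interchange L K x g y f t \<and> xhat x y f \<ge> xhat x y t + 1"

(* imbalance index: v lists \<hat>x_[1..L] (real queues, non-increasing) followed by \<hat>x_0;
   0-based positions 0..L correspond to [1]..[L+1]. *)
definition kappa :: "nat \<Rightarrow> (nat \<Rightarrow> int) \<Rightarrow> int" where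
  "kappa L xh = (let v = rev (sort (map xh [1..<L+1])) @ [xh 0] in
     (\<Sum>i<L. \<Sum>j\<in>{i+1..L}. v ! i - v ! j))"

definition queue_order :: "nat \<Rightarrow> (nat \<Rightarrow> int) \<Rightarrow> (nat \<Rightarrow> nat) \<Rightarrow> bool" where
  "queue_order L xh \<sigma> \<longleftrightarrow>
     bij_betw \<sigma> {1..L+1} {0..L} \<and> \<sigma> (L+1) = 0 \<and>
     (\<forall>i j. 1 \<le> i \<and> i < j \<and> j \<le> L+1 \<longrightarrow> xh (\<sigma> j) \<le> xh (\<sigma> i))"

definition tie_positions ::
  "nat \<Rightarrow> (nat \<Rightarrow> int) \<Rightarrow> (nat \<Rightarrow> nat) \<Rightarrow> nat \<Rightarrow> nat \<Rightarrow> nat \<Rightarrow> nat \<Rightarrow> bool" where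
  "tie_positions L xh \<sigma> f t l s \<longleftrightarrow>
     l \<in> {1..L+1} \<and> s \<in> {1..L+1} \<and> \<sigma> l = f \<and> \<sigma> s = t \<and>
     (\<forall>j. l < j \<and> j \<le> L+1 \<longrightarrow> xh (\<sigma> j) < xh (\<sigma> l)) \<and>
     (\<forall>j. 1 \<le> j \<and> j < s \<longrightarrow> xh (\<sigma> s) < xh (\<sigma> j))"

end

theory Submission imports Defs "HOL-Library.Multiset" begin

definition G :: "int list \<Rightarrow> int" where
  "G xs = sum_list (map (\<lambda>a. sum_list (map (\<lambda>b. \<bar>a - b\<bar>) xs)) xs)"

lemma perm_sum_list: fixes k :: "'a \<Rightarrow> 'b::comm_monoid_add" shows "mset xs = mset ys \<Longrightarrow> sum_list (map k xs) = sum_list (map k ys)"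
proof -
  assume m: "mset xs = mset ys"
  have a: "\<And>zs. sum_list (map k zs) = sum_mset (image_mset k (mset zs))"
    by (simp only: sum_mset_sum_list[symmetric] mset_map)
  show ?thesis unfolding a m ..
qed

lemma G_perm: "mset xs = mset ys \<Longrightarrow> G xs = G ys"
proof -
  assume m: "mset xs = mset ys"
  have "G xs = sum_list (map (\<lambda>a. sum_list (map (\<lambda>b. \<bar>a - b\<bar>) ys)) xs)"
    unfolding G_def by (rule arg_cong[where f=sum_list], rule map_cong[OF refl], rule perm_sum_list[OF m])
  also have "\<dots> = G ys" unfolding G_def by (rule perm_sum_list[OF m])
  finally show ?thesis .
qed

lemma sum_list_map_nth: "sum_list (map k xs) = (\<Sum>i<length xs. k (xs!i))"
  by (simp add: sum_list_sum_nth atLeast0LessThan)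

lemma G_nth: "G xs = (\<Sum>i<length xs. \<Sum>j<length xs. \<bar>xs!i - xs!j\<bar>)"
  unfolding G_def by (simp add: sum_list_map_nth)

lemma double_abs: fixes n :: nat shows "(\<Sum>i<n. \<Sum>j<n. \<bar>w i - w j\<bar>) = 2 * (\<Sum>i<n. \<Sum>j\<in>{i<..<n}. \<bar>w i - (w j::int)\<bar>)"
proof (induction n)
  case 0 then show ?case by simp
next
  case (Suc n)
  have emp: "{n<..<Suc n} = {}" by auto
  have e: "\<And>i. i < n \<Longrightarrow> {i<..<Suc n} = insert n {i<..<n}" by auto
  have "(\<Sum>i<Suc n. \<Sum>j\<in>{i<..<Suc n}. \<bar>w i - w j\<bar>) = (\<Sum>i<n. \<Sum>j\<in>{i<..<Suc n}. \<bar>w i - w j\<bar>)"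
    using emp by simp
  also have "\<dots> = (\<Sum>i<n. \<bar>w i - w n\<bar> + (\<Sum>j\<in>{i<..<n}. \<bar>w i - w j\<bar>))"
    by (rule sum.cong) (auto simp: e)
  finally have r: "(\<Sum>i<Suc n. \<Sum>j\<in>{i<..<Suc n}. \<bar>w i - w j\<bar>) = (\<Sum>i<n. \<bar>w i - w n\<bar>) + (\<Sum>i<n. \<Sum>j\<in>{i<..<n}. \<bar>w i - w j\<bar>)"
    by (simp add: sum.distrib)
  have "(\<Sum>i<Suc n. \<Sum>j<Suc n. \<bar>w i - w j\<bar>) = (\<Sum>i<n. \<Sum>j<n. \<bar>w i - w j\<bar>) + (\<Sum>i<n. \<bar>w i - w n\<bar>) + (\<Sum>j<n. \<bar>w n - w j\<bar>)"
    by (simp add: sum.distrib)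
  also have "(\<Sum>j<n. \<bar>w n - w j\<bar>) = (\<Sum>i<n. \<bar>w i - w n\<bar>)" by (simp add: abs_minus_commute)
  finally show ?case using Suc r by simp
qed

lemma kappa_pairs:
  assumes "\<forall>i\<in>{1..L}. h 0 \<le> h i"
  shows "2 * kappa L h = (\<Sum>p\<le>L. \<Sum>q\<le>L. \<bar>h p - h q\<bar>)"
proof -
  define v where "v = rev (sort (map h [1..<L+1])) @ [h 0]"
  have len: "length v = L+1" by (simp add: v_def)
  have srt: "sorted_wrt (\<ge>) v" unfolding v_def
    using assms by (auto simp: sorted_wrt_append sorted_wrt_rev)
  have m: "mset v = mset (map h [0..<L+1])"
    by (simp add: v_def upt_rec[of 0])
  have "G (map h [0..<L+1]) = (\<Sum>p\<in>set [0..<L+1]. \<Sum>q\<in>set [0..<L+1]. \<bar>h p - h q\<bar>)"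
    unfolding G_def by (simp add: sum_set_upt_conv_sum_list_nat comp_def del: set_upt upt_Suc)
  also have "set [0..<L+1] = {..L}" by auto
  finally have "(\<Sum>p\<le>L. \<Sum>q\<le>L. \<bar>h p - h q\<bar>) = G (map h [0..<L+1])" by simp
  also have "\<dots> = G v" by (rule G_perm) (rule m[symmetric])
  also have "\<dots> = 2 * (\<Sum>i<L+1. \<Sum>j\<in>{i<..<L+1}. \<bar>v!i - v!j\<bar>)"
    unfolding G_nth len by (rule double_abs)
  also have "(\<Sum>i<L+1. \<Sum>j\<in>{i<..<L+1}. \<bar>v!i - v!j\<bar>) = (\<Sum>i<L. \<Sum>j\<in>{i+1..L}. v!i - v!j)"
  proof -
    have emp: "{L<..<Suc L} = {}" by auto
    have "(\<Sum>i<L+1. \<Sum>j\<in>{i<..<L+1}. \<bar>v!i - v!j\<bar>) = (\<Sum>i<L. \<Sum>j\<in>{i<..<L+1}. \<bar>v!i - v!j\<bar>)"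
      using emp by simp
    also have "\<dots> = (\<Sum>i<L. \<Sum>j\<in>{i+1..L}. v!i - v!j)"
    proof (rule sum.cong[OF refl], rule sum.cong)
      fix i assume "i \<in> {..<L}" show "{i<..<L+1} = {i+1..L}" by auto
    next
      fix i j assume "i \<in> {..<L}" "j \<in> {i+1..L}"
      then have "v!j \<le> v!i" using srt len by (auto simp: sorted_wrt_iff_nth_less)
      then show "\<bar>v!i - v!j\<bar> = v!i - v!j" by simp
    qed
    finally show ?thesis .
  qed
  finally have "(\<Sum>p\<le>L. \<Sum>q\<le>L. \<bar>h p - h q\<bar>) = 2 * (\<Sum>i<L. \<Sum>j\<in>{i+1..L}. v!i - v!j)" .
  moreover have "kappa L h = (\<Sum>i<L. \<Sum>j\<in>{i+1..L}. v!i - v!j)"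
    unfolding kappa_def v_def Let_def by (rule refl)
  ultimately show ?thesis by simp
qed

lemma F_split:
  fixes h :: "nat \<Rightarrow> int"
  assumes "finite R" "f \<notin> R" "t \<notin> R" "f \<noteq> t"
  shows "(\<Sum>p\<in>insert f (insert t R). \<Sum>q\<in>insert f (insert t R). \<bar>h p - h q\<bar>) =
     (\<Sum>p\<in>R. \<Sum>q\<in>R. \<bar>h p - h q\<bar>) + 2 * (\<Sum>q\<in>R. \<bar>h f - h q\<bar> + \<bar>h t - h q\<bar>) + 2 * \<bar>h f - h t\<bar>"
  using assms by (simp add: sum.distrib abs_minus_commute algebra_simps)

lemma fw_bounds:
  assumes "feasible_withdrawal L K x g y"
  shows "\<forall>i\<in>{1..L}. 0 \<le> xhat x y i" and "0 \<le> y 0"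
proof -
  obtain q where fc: "feasible_control L K x g q" and yq: "\<forall>i\<le>L. y i = withdrawal K q i"
    using assms unfolding feasible_withdrawal_def by blast
  show "\<forall>i\<in>{1..L}. 0 \<le> xhat x y i"
  proof
    fix i assume i: "i \<in> {1..L}"
    then have "y i = withdrawal K q i" using yq by simp
    moreover have "card {j\<in>{1..K}. q j = i} \<le> x i" using fc i unfolding feasible_control_def by blast
    ultimately show "0 \<le> xhat x y i" unfolding xhat_def withdrawal_def by simp
  qed
  show "0 \<le> y 0" using yq unfolding withdrawal_def by auto
qed

lemma ex_order:
  fixes h :: "nat \<Rightarrow> int"
  assumes fL: "f \<le> L" and tL: "t \<le> L" and ft: "f \<noteq> t" and f0: "f \<noteq> 0"
    and ab: "h t + 1 \<le> h f"
    and hr: "\<forall>i\<in>{1..L}. 0 \<le> h i" and hlow: "\<And>r. r \<le> L \<Longrightarrow> h 0 \<le> h r"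
    and t0: "t = 0 \<Longrightarrow> h 0 \<le> -1"
  shows "\<exists>\<sigma> l s. queue_order L h \<sigma> \<and> tie_positions L h \<sigma> f t l s"
proof -
  define tb :: "nat \<Rightarrow> int" where "tb i = (if i = f then 2 else if i = t then 0 else 1)" for i
  define key where "key i = 3 * (- h i) + tb i" for i
  define qs where "qs = sort_key key [1..<L+1]"
  define ws where "ws = qs @ [0]"
  define \<sigma> where "\<sigma> j = ws ! (j - 1)" for j
  have tbf: "tb f = 2" and tbt: "tb t = 0" using ft by (simp_all add: tb_def)
  have tb2: "\<And>r. tb r = 2 \<Longrightarrow> r = f" and tb0: "\<And>r. tb r = 0 \<Longrightarrow> r = t"
    by (auto simp: tb_def split: if_splits)
  have key_h: "\<And>p r. key p \<le> key r \<Longrightarrow> h r \<le> h p \<and> (h r = h p \<longrightarrow> tb p \<le> tb r)"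
  proof -
    fix p r assume "key p \<le> key r"
    moreover have "0 \<le> tb p" "tb p \<le> 2" "0 \<le> tb r" "tb r \<le> 2" by (auto simp: tb_def)
    ultimately show "h r \<le> h p \<and> (h r = h p \<longrightarrow> tb p \<le> tb r)" unfolding key_def by linarith
  qed
  have qs_set: "set qs = {1..L}" by (auto simp: qs_def)
  have qs_dist: "distinct qs" by (simp add: qs_def)
  have qs_len: "length qs = L" by (simp add: qs_def)
  have qs_sorted: "sorted (map key qs)" by (simp add: qs_def)
  have keyle: "\<And>i j. i \<le> j \<Longrightarrow> j < L \<Longrightarrow> key (qs!i) \<le> key (qs!j)"
  proof -
    fix i j assume "i \<le> j" "j < L"
    then have "(map key qs)!i \<le> (map key qs)!j" using sorted_nth_mono[OF qs_sorted] qs_len by simp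
    then show "key (qs!i) \<le> key (qs!j)" using \<open>i \<le> j\<close> \<open>j < L\<close> qs_len by simp
  qed
  have ws_dist: "distinct ws" using qs_dist qs_set by (simp add: ws_def)
  have ws_set: "set ws = {0..L}" using qs_set by (auto simp: ws_def)
  have ws_len: "length ws = L+1" using qs_len by (simp add: ws_def)
  have wsL: "ws ! L = 0" using qs_len by (simp add: ws_def nth_append)
  have wsi: "\<And>i. i < L \<Longrightarrow> ws ! i = qs ! i" using qs_len by (simp add: ws_def nth_append)
  have qs_in: "\<And>i. i < L \<Longrightarrow> qs ! i \<in> {1..L}" using qs_set qs_len nth_mem by blast
  have b1: "bij_betw (\<lambda>j. j - 1) {1..L+1} {..<L+1}"
    unfolding bij_betw_def
  proof
    show "inj_on (\<lambda>j. j - 1) {1..L+1}" by (auto simp: inj_on_def)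
    show "(\<lambda>j. j - 1) ` {1..L+1} = {..<L+1}"
    proof
      show "(\<lambda>j. j - 1) ` {1..L+1} \<subseteq> {..<L+1}" by auto
      show "{..<L+1} \<subseteq> (\<lambda>j. j - 1) ` {1..L+1}"
      proof
        fix i assume "i \<in> {..<L+1}"
        then have "Suc i \<in> {1..L+1}" by simp
        moreover have "i = Suc i - 1" by simp
        ultimately show "i \<in> (\<lambda>j. j - 1) ` {1..L+1}" by (rule rev_image_eqI)
      qed
    qed
  qed
  have b2: "bij_betw ((!) ws) {..<L+1} {0..L}"
    using bij_betw_nth[OF ws_dist] ws_len ws_set by simp
  have bij: "bij_betw \<sigma> {1..L+1} {0..L}"
  proof -
    have "bij_betw ((!) ws \<circ> (\<lambda>j. j - 1)) {1..L+1} {0..L}" by (rule bij_betw_trans[OF b1 b2])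
    moreover have "((!) ws \<circ> (\<lambda>j. j - 1)) = \<sigma>" by (auto simp: \<sigma>_def)
    ultimately show ?thesis by simp
  qed
  have \<sigma>L: "\<sigma> (L+1) = 0" using wsL by (simp add: \<sigma>_def)
  have \<sigma>q: "\<And>j. 1 \<le> j \<Longrightarrow> j \<le> L \<Longrightarrow> \<sigma> j = qs ! (j - 1)" using wsi by (simp add: \<sigma>_def)
  have mono: "\<And>i j. 1 \<le> i \<and> i < j \<and> j \<le> L+1 \<longrightarrow> h (\<sigma> j) \<le> h (\<sigma> i)"
  proof
    fix i j assume A: "1 \<le> i \<and> i < j \<and> j \<le> L+1"
    show "h (\<sigma> j) \<le> h (\<sigma> i)"
    proof (cases "j = L+1")
      case True
      have "i \<in> {1..L+1}" using A by simp
      then have "\<sigma> i \<in> {0..L}" using bij_betw_apply[OF bij] by blast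
      then show ?thesis using True \<sigma>L hlow by simp
    next
      case False
      then have "i - 1 \<le> j - 1" "j - 1 < L" using A by auto
      then have "key (qs!(i-1)) \<le> key (qs!(j-1))" by (rule keyle)
      then show ?thesis using \<sigma>q[of i] \<sigma>q[of j] A False key_h by simp
    qed
  qed
  have qo: "queue_order L h \<sigma>" unfolding queue_order_def using bij \<sigma>L mono by blast
  have "f \<in> set ws" using ws_set fL by simp
  then obtain li where li: "li < L+1" "ws ! li = f" using ws_len by (auto simp: in_set_conv_nth)
  have "t \<in> set ws" using ws_set tL by simp
  then obtain si where si: "si < L+1" "ws ! si = t" using ws_len by (auto simp: in_set_conv_nth)
  have liL: "li < L" using li wsL f0 by (cases "li = L") auto
  have aft: "\<forall>j. Suc li < j \<and> j \<le> L+1 \<longrightarrow> h (\<sigma> j) < h (\<sigma> (Suc li))"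
  proof (intro allI impI)
    fix j assume A: "Suc li < j \<and> j \<le> L+1"
    have sl: "\<sigma> (Suc li) = f" using li by (simp add: \<sigma>_def)
    show "h (\<sigma> j) < h (\<sigma> (Suc li))"
    proof (cases "j = L+1")
      case True
      then show ?thesis using \<sigma>L sl hlow[OF tL] ab by simp
    next
      case False
      then have jl: "li \<le> j - 1" "j - 1 < L" using A by auto
      have fq: "qs ! li = f" using li wsi liL by simp
      have "key f \<le> key (qs!(j-1))" using keyle[OF jl] fq by simp
      then have k: "h (qs!(j-1)) \<le> h f \<and> (h (qs!(j-1)) = h f \<longrightarrow> tb f \<le> tb (qs!(j-1)))" by (rule key_h)
      have "qs!(j-1) \<noteq> f"
      proof
        assume "qs!(j-1) = f"
        then have "qs!(j-1) = qs!li" using fq by simp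
        then have "j - 1 = li" using nth_eq_iff_index_eq[OF qs_dist] jl liL qs_len by simp
        then show False using A by arith
      qed
      moreover have "tb (qs!(j-1)) \<le> 2" by (simp add: tb_def)
      ultimately have "h (qs!(j-1)) \<noteq> h f"
        using k tbf tb2[of "qs!(j-1)"] by auto
      then have "h (qs!(j-1)) < h f" using k by simp
      then show ?thesis using \<sigma>q[of j] A False sl by simp
    qed
  qed
  have bef: "\<forall>j. 1 \<le> j \<and> j < Suc si \<longrightarrow> h (\<sigma> (Suc si)) < h (\<sigma> j)"
  proof (intro allI impI)
    fix j assume A: "1 \<le> j \<and> j < Suc si"
    have ss: "\<sigma> (Suc si) = t" using si by (simp add: \<sigma>_def)
    have jL: "j \<le> L" using A si by simp
    have jq: "\<sigma> j = qs ! (j - 1)" using \<sigma>q[of j] A jL by simp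
    have "j - 1 < L" using A jL by arith
    then have jin: "qs ! (j - 1) \<in> {1..L}" by (rule qs_in)
    show "h (\<sigma> (Suc si)) < h (\<sigma> j)"
    proof (cases "t = 0")
      case True
      have "0 \<le> h (qs ! (j - 1))" using hr jin by blast
      then show ?thesis using ss jq t0 True by simp
    next
      case False
      then have siL: "si < L" using si wsL by (cases "si = L") auto
      have tq: "qs ! si = t" using si wsi siL by simp
      have jl: "j - 1 \<le> si" "si < L" using A siL by auto
      have "key (qs!(j-1)) \<le> key t" using keyle[OF jl] tq by simp
      then have k: "h t \<le> h (qs!(j-1)) \<and> (h t = h (qs!(j-1)) \<longrightarrow> tb (qs!(j-1)) \<le> tb t)" by (rule key_h)
      have "qs!(j-1) \<noteq> t"
      proof
        assume "qs!(j-1) = t"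
        then have "qs!(j-1) = qs!si" using tq by simp
        then have "j - 1 = si" using nth_eq_iff_index_eq[OF qs_dist] jl qs_len by simp
        then show False using A by arith
      qed
      moreover have "0 \<le> tb (qs!(j-1))" by (simp add: tb_def)
      ultimately have "h t \<noteq> h (qs!(j-1))"
        using k tbt tb0[of "qs!(j-1)"] by auto
      then have "h t < h (qs!(j-1))" using k by simp
      then show ?thesis using jq ss by simp
    qed
  qed
  have tp: "tie_positions L h \<sigma> f t (Suc li) (Suc si)"
    unfolding tie_positions_def using li si aft bef by (simp add: \<sigma>_def)
  show ?thesis using qo tp by blast
qed

theorem lemma2:
  fixes L K :: nat and x :: "nat \<Rightarrow> nat" and g :: "nat \<Rightarrow> nat \<Rightarrow> bool"
    and y :: "nat \<Rightarrow> int" and f t :: nat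
  assumes "x 0 = 0"
    and "\<forall>j\<in>{1..K}. g 0 j"
    and "feasible_withdrawal L K x g y"
    and "balancing_interchange L K x g y f t"
  shows "(\<exists>\<sigma> l s. queue_order L (xhat x y) \<sigma> \<and> tie_positions L (xhat x y) \<sigma> f t l s)
    \<and> (\<forall>\<sigma> l s. queue_order L (xhat x y) \<sigma> \<and> tie_positions L (xhat x y) \<sigma> f t l s \<longrightarrow>
          l < s \<and>
          kappa L (xhat x (\<lambda>i. y i + interchange f t i)) =
            kappa L (xhat x y)
            - 2 * (int s - int l) * of_bool (xhat x y f \<ge> xhat x y t + 2))"
proof -
  define h where "h = xhat x y"
  define y' where "y' = (\<lambda>i. y i + interchange f t i)"
  define h' where "h' = xhat x y'"
  define a where "a = h f"
  define b where "b = h t"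
  have fL: "f \<le> L" and tL: "t \<le> L" and ft: "f \<noteq> t" and fw': "feasible_withdrawal L K x g y'"
    and ab: "a \<ge> b + 1"
    using assms(4) unfolding balancing_interchange_def feasible_interchange_def a_def b_def h_def y'_def
    by auto
  have hr: "\<forall>i\<in>{1..L}. 0 \<le> h i" using fw_bounds(1)[OF assms(3)] h_def by simp
  have h0: "h 0 \<le> 0" using fw_bounds(2)[OF assms(3)] assms(1) by (simp add: h_def xhat_def)
  have h'r: "\<forall>i\<in>{1..L}. 0 \<le> h' i" using fw_bounds(1)[OF fw'] h'_def by simp
  have h'0: "h' 0 \<le> 0" using fw_bounds(2)[OF fw'] assms(1) by (simp add: h'_def xhat_def)
  have hlow: "\<And>r. r \<le> L \<Longrightarrow> h 0 \<le> h r"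
  proof -
    fix r assume "r \<le> L"
    then show "h 0 \<le> h r" proof (cases "r = 0")
      case False then have "r \<in> {1..L}" using \<open>r \<le> L\<close> by simp
      then show ?thesis using hr h0 by force
    qed simp
  qed
  have h'low: "\<forall>i\<in>{1..L}. h' 0 \<le> h' i" using h'r h'0 by force
  have hlow': "\<forall>i\<in>{1..L}. h 0 \<le> h i" using hlow by auto
  have f0: "f \<noteq> 0"
  proof
    assume "f = 0"
    then have "t \<in> {1..L}" using ft tL by auto
    then have "0 \<le> b" using hr b_def by auto
    moreover have "a \<le> 0" using h0 \<open>f = 0\<close> a_def by simp
    ultimately show False using ab by simp
  qed
  have t0: "t = 0 \<Longrightarrow> h 0 \<le> -1"
  proof -
    assume "t = 0"
    have "0 \<le> y' 0" using fw_bounds(2)[OF fw'] .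
    then have "1 \<le> y 0" using \<open>t = 0\<close> f0 by (simp add: y'_def interchange_def)
    then show "h 0 \<le> -1" using assms(1) by (simp add: h_def xhat_def)
  qed
  have h'h: "\<And>i. h' i = h i - interchange f t i"
    by (simp add: h'_def h_def xhat_def y'_def)
  have b0: "h 0 \<le> b" using hlow tL b_def by simp
  have ab': "h t + 1 \<le> h f" using ab a_def b_def by simp
  have ex: "\<exists>\<sigma> l s. queue_order L h \<sigma> \<and> tie_positions L h \<sigma> f t l s"
    by (rule ex_order[OF fL tL ft f0 ab' hr hlow t0])
  have main: "\<And>\<sigma> l s. queue_order L h \<sigma> \<Longrightarrow> tie_positions L h \<sigma> f t l s \<Longrightarrow>
          l < s \<and> kappa L h' = kappa L h - 2 * (int s - int l) * of_bool (h f \<ge> h t + 2)"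
  proof -
    fix \<sigma> l s assume qo: "queue_order L h \<sigma>" and tp: "tie_positions L h \<sigma> f t l s"
    have bij: "bij_betw \<sigma> {1..L+1} {0..L}" and mono: "\<And>i j. 1 \<le> i \<Longrightarrow> i < j \<Longrightarrow> j \<le> L+1 \<Longrightarrow> h (\<sigma> j) \<le> h (\<sigma> i)"
      using qo unfolding queue_order_def by auto
    have l1: "l \<in> {1..L+1}" and s1: "s \<in> {1..L+1}" and sl: "\<sigma> l = f" and ss: "\<sigma> s = t"
      and aft: "\<And>j. l < j \<Longrightarrow> j \<le> L+1 \<Longrightarrow> h (\<sigma> j) < a"
      and bef: "\<And>j. 1 \<le> j \<Longrightarrow> j < s \<Longrightarrow> b < h (\<sigma> j)"
      using tp unfolding tie_positions_def a_def b_def by auto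
    have lts: "l < s"
    proof (rule ccontr)
      assume "\<not> l < s"
      then consider "s = l" | "s < l" by linarith
      then show False
      proof cases
        case 1 then show False using sl ss ft by simp
      next
        case 2 then have "h (\<sigma> l) \<le> h (\<sigma> s)" using mono l1 s1 by auto
        then show False using sl ss ab a_def b_def by simp
      qed
    qed
    define B where "B = {r\<in>{0..L}. b < h r \<and> h r < a}"
    have Bimg: "B = \<sigma> ` {l<..<s}"
    proof
      show "\<sigma> ` {l<..<s} \<subseteq> B"
      proof
        fix r assume "r \<in> \<sigma> ` {l<..<s}"
        then obtain j where j: "l < j" "j < s" "r = \<sigma> j" by auto
        have jr: "j \<in> {1..L+1}" using l1 s1 j(1,2) by simp
        have "r \<in> {0..L}" using bij_betw_apply[OF bij jr] j(3) by simp
        moreover have "h r < a" using aft[of j] j jr by simp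
        moreover have "b < h r" using bef[of j] j jr by simp
        ultimately show "r \<in> B" unfolding B_def by simp
      qed
    next
      show "B \<subseteq> \<sigma> ` {l<..<s}"
      proof
        fix r assume r: "r \<in> B"
        then have "r \<in> {0..L}" unfolding B_def by simp
        then have "r \<in> \<sigma> ` {1..L+1}" using bij_betw_imp_surj_on[OF bij] by simp
        then obtain j where j: "j \<in> {1..L+1}" "r = \<sigma> j" by blast
        have ra: "h r < a" and rb: "b < h r" using r unfolding B_def by simp_all
        have "l < j"
        proof (rule ccontr)
          assume "\<not> l < j"
          then have "j = l \<or> j < l" by linarith
          then have "h (\<sigma> l) \<le> h (\<sigma> j)"
          proof
            assume "j < l" then show ?thesis using mono[of j l] j(1) l1 by simp
          qed simp
          then show False using ra j(2) sl unfolding a_def by simp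
        qed
        moreover have "j < s"
        proof (rule ccontr)
          assume "\<not> j < s"
          then have "j = s \<or> s < j" by linarith
          then have "h (\<sigma> j) \<le> h (\<sigma> s)"
          proof
            assume "s < j" then show ?thesis using mono[of s j] j(1) s1 by simp
          qed simp
          then show False using rb j(2) ss unfolding b_def by simp
        qed
        ultimately have "j \<in> {l<..<s}" by simp
        then show "r \<in> \<sigma> ` {l<..<s}" using j(2) by (rule rev_image_eqI)
      qed
    qed
    have inj: "inj_on \<sigma> {l<..<s}"
    proof (rule inj_on_subset[OF bij_betw_imp_inj_on[OF bij]])
      show "{l<..<s} \<subseteq> {1..L+1}" using l1 s1 by auto
    qed
    have "card B = card {l<..<s}" unfolding Bimg using card_image[OF inj] .
    then have cardB: "card B = s - l - 1" by simp
    define R where "R = {..L} - {f, t}"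
    have SR: "{..L} = insert f (insert t R)" using fL tL unfolding R_def by auto
    have finR: "finite R" and fR: "f \<notin> R" and tR: "t \<notin> R" unfolding R_def by auto
    have Fh: "2 * kappa L h = (\<Sum>p\<in>R. \<Sum>q\<in>R. \<bar>h p - h q\<bar>) + 2 * (\<Sum>q\<in>R. \<bar>h f - h q\<bar> + \<bar>h t - h q\<bar>) + 2 * \<bar>h f - h t\<bar>"
      using kappa_pairs[OF hlow'] F_split[OF finR fR tR ft, of h] SR by simp
    have Fh': "2 * kappa L h' = (\<Sum>p\<in>R. \<Sum>q\<in>R. \<bar>h' p - h' q\<bar>) + 2 * (\<Sum>q\<in>R. \<bar>h' f - h' q\<bar> + \<bar>h' t - h' q\<bar>) + 2 * \<bar>h' f - h' t\<bar>"
      using kappa_pairs[OF h'low] F_split[OF finR fR tR ft, of h'] SR by simp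
    have onR: "\<And>q. q \<in> R \<Longrightarrow> h' q = h q" using h'h fR tR unfolding interchange_def by auto
    have h'f: "h' f = a - 1" and h't: "h' t = b + 1" using h'h ft unfolding interchange_def a_def b_def by auto
    have s1': "(\<Sum>p\<in>R. \<Sum>q\<in>R. \<bar>h' p - h' q\<bar>) = (\<Sum>p\<in>R. \<Sum>q\<in>R. \<bar>h p - h q\<bar>)"
      using onR by simp
    have pt: "\<And>q. q \<in> R \<Longrightarrow> \<bar>h' f - h' q\<bar> + \<bar>h' t - h' q\<bar> =
        (\<bar>h f - h q\<bar> + \<bar>h t - h q\<bar>) - 2 * of_bool (b < h q \<and> h q < a)"
    proof -
      fix q assume "q \<in> R"
      then have "h' q = h q" by (rule onR)
      then show "\<bar>h' f - h' q\<bar> + \<bar>h' t - h' q\<bar> =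
        (\<bar>h f - h q\<bar> + \<bar>h t - h q\<bar>) - 2 * of_bool (b < h q \<and> h q < a)"
        using h'f h't ab unfolding a_def b_def by (auto split: abs_split)
    qed
    have RB: "R \<inter> {q. b < h q \<and> h q < a} = B"
      unfolding R_def B_def using ab a_def b_def by auto
    have s2: "(\<Sum>q\<in>R. \<bar>h' f - h' q\<bar> + \<bar>h' t - h' q\<bar>) =
       (\<Sum>q\<in>R. \<bar>h f - h q\<bar> + \<bar>h t - h q\<bar>) - 2 * int (card B)"
    proof -
      have "(\<Sum>q\<in>R. \<bar>h' f - h' q\<bar> + \<bar>h' t - h' q\<bar>) =
         (\<Sum>q\<in>R. (\<bar>h f - h q\<bar> + \<bar>h t - h q\<bar>) - 2 * of_bool (b < h q \<and> h q < a))"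
        using pt by simp
      also have "\<dots> = (\<Sum>q\<in>R. \<bar>h f - h q\<bar> + \<bar>h t - h q\<bar>) - 2 * (\<Sum>q\<in>R. of_bool (b < h q \<and> h q < a))"
        by (simp add: sum_subtractf sum_distrib_left)
      also have "(\<Sum>q\<in>R. of_bool (b < h q \<and> h q < a)) = (int (card B) :: int)"
        using finR RB by simp
      finally show ?thesis .
    qed
    have s3: "\<bar>h' f - h' t\<bar> = \<bar>h f - h t\<bar> - 2 * of_bool (h f \<ge> h t + 2)"
      using h'f h't ab unfolding a_def b_def by auto
    have Bempty: "\<not> (h f \<ge> h t + 2) \<Longrightarrow> card B = 0"
    proof -
      assume "\<not> (h f \<ge> h t + 2)"
      then have "B = {}" unfolding B_def using ab a_def b_def by auto
      then show "card B = 0" by simp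
    qed
    have "2 * kappa L h' = 2 * kappa L h - 4 * int (card B) - 4 * of_bool (h f \<ge> h t + 2)"
      using Fh Fh' s1' s2 s3 by simp
    then have "2 * kappa L h' = 2 * kappa L h - 4 * of_bool (h f \<ge> h t + 2) * (int s - int l)"
      using Bempty cardB lts by (cases "h f \<ge> h t + 2") (auto simp: algebra_simps)
    then show "l < s \<and> kappa L h' = kappa L h - 2 * (int s - int l) * of_bool (h f \<ge> h t + 2)"
      using lts by (cases "h f \<ge> h t + 2") (simp_all add: algebra_simps)
  qed
  show ?thesis
  proof (rule conjI)
    show "\<exists>\<sigma> l s. queue_order L (xhat x y) \<sigma> \<and> tie_positions L (xhat x y) \<sigma> f t l s"
      using ex unfolding h_def .
  next
    show "\<forall>\<sigma> l s. queue_order L (xhat x y) \<sigma> \<and> tie_positions L (xhat x y) \<sigma> f t l s \<longrightarrow>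
          l < s \<and>
          kappa L (xhat x (\<lambda>i. y i + interchange f t i)) =
            kappa L (xhat x y)
            - 2 * (int s - int l) * of_bool (xhat x y f \<ge> xhat x y t + 2)"
    proof (intro allI impI)
      fix \<sigma> l s assume A: "queue_order L (xhat x y) \<sigma> \<and> tie_positions L (xhat x y) \<sigma> f t l s"
      have "l < s \<and> kappa L h' = kappa L h - 2 * (int s - int l) * of_bool (h f \<ge> h t + 2)"
        using main[of \<sigma> l s] A unfolding h_def by blast
      then show "l < s \<and>
          kappa L (xhat x (\<lambda>i. y i + interchange f t i)) =
            kappa L (xhat x y)
            - 2 * (int s - int l) * of_bool (xhat x y f \<ge> xhat x y t + 2)"
        unfolding h'_def y'_def h_def .
    qed
  qed
qed

end
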